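(* Let $\mathcal{X}$ be a finite set, $\pi$ a probability mass function on $\mathcal{X}$ with full support, and $P$ a $\pi$-stationary transition matrix on $\mathcal{X}$. Let a group $\mathcal{G}$ act on $\mathcal{X}$ with orbits $\mathcal{O}_1,\dots,\mathcal{O}_k$, and let $G$ be the associated Gibbs orbit kernel. For each $i\in\{1,\dots,k\}$, the restriction chain $(GPG)_i$ on $\mathcal{O}_i$ has eigenvalues $\lambda_1=1$ and $\lambda_2=1-\overline{a}_i$, where $a_i(x):=\sum_{y\in\mathcal{O}_i}P(x,y)$ and $\overline{a}_i:=\sum_{x\in\mathcal{O}_i}\frac{\pi(x)}{\pi(\mathcal{O}_i)}\sum_{y\in\mathcal{O}_i}P(x,y)$.
   Context: The Gibbs orbit kernel is $G(x,y)=\pi(y)/\pi(\mathcal{O}(x))$ if $y\in\mathcal{O}(x)$ (the orbit of $x$), and $0$ otherwise, where $\pi(A)=\sum_{z\in A}\pi(z)$. For a transition matrix $K$ on $\mathcal{X}$, the restriction chain $K_i$ on $\mathcal{O}_i$ is the matrix on $\mathcal{O}_i\times\mathcal{O}_i$ with $K_i(x,y)=K(x,y)$ for $x\ne y$ and $K_i(x,x)=1-\sum_{z\in\mathcal{O}_i\setminus\{x\}}K(x,z)$. *)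

theory Defs
  imports "HOL-Analysis.Analysis" "HOL-Algebra.Group_Action"
begin

text \<open>Kernels (matrices) on a finite state space X are functions of type
  'a => 'a => real; only their values on X are relevant.\<close>

definition pmf_full_support :: "'a set \<Rightarrow> ('a \<Rightarrow> real) \<Rightarrow> bool" where
  "pmf_full_support X \<pi> \<longleftrightarrow> (\<forall>x\<in>X. \<pi> x > 0) \<and> (\<Sum>x\<in>X. \<pi> x) = 1"

definition transition_matrix :: "'a set \<Rightarrow> ('a \<Rightarrow> 'a \<Rightarrow> real) \<Rightarrow> bool" where
  "transition_matrix X P \<longleftrightarrow>
     (\<forall>x\<in>X. \<forall>y\<in>X. P x y \<ge> 0) \<and> (\<forall>x\<in>X. (\<Sum>y\<in>X. P x y) = 1)"

definition stationary :: "'a set \<Rightarrow> ('a \<Rightarrow> real) \<Rightarrow> ('a \<Rightarrow> 'a \<Rightarrow> real) \<Rightarrow> bool" where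
  "stationary X \<pi> P \<longleftrightarrow> (\<forall>y\<in>X. (\<Sum>x\<in>X. \<pi> x * P x y) = \<pi> y)"

definition kmult :: "'a set \<Rightarrow> ('a \<Rightarrow> 'a \<Rightarrow> real) \<Rightarrow> ('a \<Rightarrow> 'a \<Rightarrow> real) \<Rightarrow> 'a \<Rightarrow> 'a \<Rightarrow> real" where
  "kmult X K L x y = (\<Sum>z\<in>X. K x z * L z y)"

definition gibbs_orbit_kernel ::
  "('g, 'b) monoid_scheme \<Rightarrow> ('g \<Rightarrow> 'a \<Rightarrow> 'a) \<Rightarrow> ('a \<Rightarrow> real) \<Rightarrow> 'a \<Rightarrow> 'a \<Rightarrow> real" where
  "gibbs_orbit_kernel G \<phi> \<pi> x y =
     (if y \<in> orbit G \<phi> x then \<pi> y / (\<Sum>z\<in>orbit G \<phi> x. \<pi> z) else 0)"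

definition restriction_chain :: "('a \<Rightarrow> 'a \<Rightarrow> real) \<Rightarrow> 'a set \<Rightarrow> 'a \<Rightarrow> 'a \<Rightarrow> real" where
  "restriction_chain K Ob x y =
     (if x \<noteq> y then K x y else 1 - (\<Sum>z\<in>Ob - {x}. K x z))"

definition is_eigenvalue_on :: "'a set \<Rightarrow> ('a \<Rightarrow> 'a \<Rightarrow> real) \<Rightarrow> complex \<Rightarrow> bool" where
  "is_eigenvalue_on S K mu \<longleftrightarrow>
     (\<exists>f :: 'a \<Rightarrow> complex. (\<exists>x\<in>S. f x \<noteq> 0) \<and>
        (\<forall>x\<in>S. (\<Sum>y\<in>S. of_real (K x y) * f y) = mu * f x))"

end

theory Submission
  imports Defs
begin

lemma sum_K:
  fixes Ob :: "'a set" and q :: "'a \<Rightarrow> real" and a :: real and K f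
  assumes fin: "finite Ob" and x: "x \<in> Ob"
    and KF: "\<forall>x\<in>Ob. \<forall>y\<in>Ob. K x y = (if x = y then 1 - a else 0) + a * q y"
  shows "(\<Sum>y\<in>Ob. of_real (K x y) * f y) = of_real (1 - a) * f x + of_real a * (\<Sum>y\<in>Ob. of_real (q y) * f y)"
proof -
  have "(\<Sum>y\<in>Ob. of_real (K x y) * f y) = (\<Sum>y\<in>Ob. (if x = y then of_real (1 - a) * f y else 0) + of_real a * (of_real (q y) * f y))"
    using x KF by (intro sum.cong) (auto simp: algebra_simps)
  also have "\<dots> = of_real (1 - a) * f x + of_real a * (\<Sum>y\<in>Ob. of_real (q y) * f y)"
    using fin x by (simp add: sum.distrib sum_distrib_left)
  finally show ?thesis .
qed

lemma eig_struct:
  fixes Ob :: "'a set" and q :: "'a \<Rightarrow> real" and a :: real and K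
  assumes fin: "finite Ob" and ne: "Ob \<noteq> {}" and qs: "(\<Sum>y\<in>Ob. q y) = 1" and qp: "\<forall>y\<in>Ob. q y > 0"
    and KF: "\<forall>x\<in>Ob. \<forall>y\<in>Ob. K x y = (if x = y then 1 - a else 0) + a * q y"
  shows "is_eigenvalue_on Ob K 1
       \<and> (card Ob \<ge> 2 \<longrightarrow> is_eigenvalue_on Ob K (of_real (1 - a)))
       \<and> (\<forall>mu. is_eigenvalue_on Ob K mu \<longrightarrow> mu = 1 \<or> mu = of_real (1 - a))"
proof (intro conjI impI allI)
  note SK = sum_K[OF fin _ KF]
  have qsc: "(\<Sum>y\<in>Ob. complex_of_real (q y)) = 1" using qs
    by (metis of_real_1 of_real_sum)
  show "is_eigenvalue_on Ob K 1"
    unfolding is_eigenvalue_on_def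
  proof (intro exI[of _ "\<lambda>_. 1"] conjI ballI)
    show "\<exists>x\<in>Ob. (1::complex) \<noteq> 0" using ne by auto
    fix x assume x: "x \<in> Ob"
    have "(\<Sum>y\<in>Ob. complex_of_real (K x y) * 1) = of_real (1 - a) * 1 + of_real a * (\<Sum>y\<in>Ob. of_real (q y) * 1)"
      by (rule SK[OF x])
    then show "(\<Sum>y\<in>Ob. complex_of_real (K x y) * 1) = 1 * 1"
      using qsc by simp
  qed
  {
    assume c2: "card Ob \<ge> 2"
    obtain u where u: "u \<in> Ob" using ne by blast
    have "card (Ob - {u}) \<ge> 1" using c2 u fin by simp
    then have "Ob - {u} \<noteq> {}" by (metis card.empty not_one_le_zero)
    then obtain v where "v \<in> Ob - {u}" by blast
    then have uv: "u \<in> Ob" "v \<in> Ob" "u \<noteq> v" using u by auto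
    define f where "f = (\<lambda>y. if y = u then complex_of_real (q v) else if y = v then - complex_of_real (q u) else 0)"
    have "(\<Sum>y\<in>Ob. complex_of_real (q y) * f y) = (\<Sum>y\<in>Ob. (if y = u then complex_of_real (q u * q v) else 0) + (if y = v then - complex_of_real (q v * q u) else 0))"
      using uv by (intro sum.cong) (auto simp: f_def)
    also have "\<dots> = 0" using uv fin by (simp add: sum.distrib)
    finally have z: "(\<Sum>y\<in>Ob. complex_of_real (q y) * f y) = 0" .
    show "is_eigenvalue_on Ob K (of_real (1 - a))"
      unfolding is_eigenvalue_on_def
    proof (intro exI[of _ f] conjI ballI)
      show "\<exists>x\<in>Ob. f x \<noteq> 0" using uv qp by (intro bexI[of _ u]) (auto simp: f_def)
      fix x assume x: "x \<in> Ob"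
      show "(\<Sum>y\<in>Ob. complex_of_real (K x y) * f y) = of_real (1 - a) * f x"
        using SK[OF x, of f] z by simp
    qed
  }
  fix mu assume "is_eigenvalue_on Ob K mu"
  then obtain f x0 where x0: "x0 \<in> Ob" "f x0 \<noteq> 0"
    and ev: "\<forall>x\<in>Ob. (\<Sum>y\<in>Ob. complex_of_real (K x y) * f y) = mu * f x"
    unfolding is_eigenvalue_on_def by blast
  define c where "c = (\<Sum>y\<in>Ob. complex_of_real (q y) * f y)"
  have eq: "mu * f x = of_real (1 - a) * f x + of_real a * c" if "x \<in> Ob" for x
    using ev SK[OF that, of f] that unfolding c_def by simp
  show "mu = 1 \<or> mu = of_real (1 - a)"
  proof (cases "mu = of_real (1 - a)")
    case False
    hence nz: "mu - of_real (1 - a) \<noteq> 0" by simp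
    have fx: "f x = of_real a * c / (mu - of_real (1 - a))" if "x \<in> Ob" for x
      using eq[OF that] nz by (simp add: field_simps)
    have "c = (\<Sum>y\<in>Ob. complex_of_real (q y) * f x0)"
      unfolding c_def using fx x0 by (intro sum.cong) auto
    also have "\<dots> = f x0" using qsc by (simp add: sum_distrib_right[symmetric])
    finally have "c = f x0" .
    with eq[OF x0(1)] have "mu * f x0 = 1 * f x0" by (simp add: algebra_simps)
    with x0 show ?thesis by simp
  qed simp
qed


theorem proposition2p6:
  fixes X :: "'a set" and \<pi> :: "'a \<Rightarrow> real" and P :: "'a \<Rightarrow> 'a \<Rightarrow> real"
    and G :: "('g, 'b) monoid_scheme" and \<phi> :: "'g \<Rightarrow> 'a \<Rightarrow> 'a" and Ob :: "'a set"
  assumes "finite X"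
    and "pmf_full_support X \<pi>"
    and "transition_matrix X P"
    and "stationary X \<pi> P"
    and "group_action G X \<phi>"
    and "Ob \<in> orbits G X \<phi>"
  defines "abar \<equiv> (\<Sum>x\<in>Ob. \<pi> x / (\<Sum>z\<in>Ob. \<pi> z) * (\<Sum>y\<in>Ob. P x y))"
  defines "K \<equiv> restriction_chain
             (kmult X (kmult X (gibbs_orbit_kernel G \<phi> \<pi>) P) (gibbs_orbit_kernel G \<phi> \<pi>)) Ob"
  shows "is_eigenvalue_on Ob K 1
       \<and> (card Ob \<ge> 2 \<longrightarrow> is_eigenvalue_on Ob K (of_real (1 - abar)))
       \<and> (\<forall>mu. is_eigenvalue_on Ob K mu \<longrightarrow> mu = 1 \<or> mu = of_real (1 - abar))"
proof -
  interpret group_action G X \<phi> by fact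
  note finX = assms(1)
  have pos: "\<forall>x\<in>X. \<pi> x > 0" using assms(2) unfolding pmf_full_support_def by blast
  obtain x0 where x0: "x0 \<in> X" "Ob = orbit G \<phi> x0"
    using assms(6) unfolding orbits_def by blast
  have ObX: "Ob \<subseteq> X" using orbits_coverture assms(6) by blast
  have x0Ob: "x0 \<in> Ob" using x0 orbit_refl by blast
  have finOb: "finite Ob" using ObX finX finite_subset by blast
  have same: "orbit G \<phi> w = Ob" if "w \<in> X" "y \<in> Ob" "y \<in> orbit G \<phi> w" for w y
  proof -
    have "orbit G \<phi> w \<in> orbits G X \<phi>" using that(1) unfolding orbits_def by blast
    then show ?thesis using disjoint_union[OF _ assms(6)] that by blast
  qed
  have orbOb: "orbit G \<phi> x = Ob" if "x \<in> Ob" for x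
    using same[of x x] that ObX orbit_refl by blast
  define S where "S = (\<Sum>z\<in>Ob. \<pi> z)"
  have Spos: "S > 0" unfolding S_def using finOb x0Ob pos ObX
    by (intro sum_pos) auto
  define Gk where "Gk = gibbs_orbit_kernel G \<phi> \<pi>"
  have G1: "Gk w y = (if w \<in> Ob then \<pi> y / S else 0)" if "w \<in> X" "y \<in> Ob" for w y
  proof (cases "w \<in> Ob")
    case True then show ?thesis using orbOb[OF True] that unfolding Gk_def gibbs_orbit_kernel_def S_def by simp
  next
    case False
    have "y \<notin> orbit G \<phi> w" using same[OF that] False orbit_refl[OF that(1)] by blast
    then show ?thesis using False unfolding Gk_def gibbs_orbit_kernel_def by simp
  qed
  have G2: "Gk x z = (if z \<in> Ob then \<pi> z / S else 0)" if "x \<in> Ob" for x z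
    using orbOb[OF that] unfolding Gk_def gibbs_orbit_kernel_def S_def by simp
  have restr: "(\<Sum>z\<in>X. (if z \<in> Ob then g z else 0)) = (\<Sum>z\<in>Ob. g z)" for g :: "'a \<Rightarrow> real"
    using sum.inter_restrict[OF finX, of g Ob] ObX by (simp add: Int_absorb1)
  have inner: "kmult X Gk P x w = (\<Sum>z\<in>Ob. \<pi> z / S * P z w)" if "x \<in> Ob" for x w
  proof -
    have "kmult X Gk P x w = (\<Sum>z\<in>X. (if z \<in> Ob then \<pi> z / S * P z w else 0))"
      unfolding kmult_def using G2[OF that] by (intro sum.cong) auto
    then show ?thesis using restr by simp
  qed
  have abar2: "abar = (\<Sum>w\<in>Ob. \<Sum>z\<in>Ob. \<pi> z / S * P z w)"
  proof -
    have "abar = (\<Sum>z\<in>Ob. \<Sum>w\<in>Ob. \<pi> z / S * P z w)"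
      unfolding abar_def S_def[symmetric] by (simp only: sum_distrib_left)
    also have "\<dots> = (\<Sum>w\<in>Ob. \<Sum>z\<in>Ob. \<pi> z / S * P z w)" by (rule sum.swap)
    finally show ?thesis .
  qed
  define q where "q y = \<pi> y / S" for y
  have M: "kmult X (kmult X Gk P) Gk x y = abar * q y" if "x \<in> Ob" "y \<in> Ob" for x y
  proof -
    have "kmult X (kmult X Gk P) Gk x y = (\<Sum>w\<in>X. (if w \<in> Ob then (\<Sum>z\<in>Ob. \<pi> z / S * P z w) * (\<pi> y / S) else 0))"
      unfolding kmult_def[of X "kmult X Gk P"] using G1[OF _ that(2)] inner[OF that(1)] by (intro sum.cong) auto
    also have "\<dots> = (\<Sum>w\<in>Ob. (\<Sum>z\<in>Ob. \<pi> z / S * P z w) * (\<pi> y / S))" by (rule restr)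
    also have "\<dots> = (\<Sum>w\<in>Ob. \<Sum>z\<in>Ob. \<pi> z / S * P z w) * (\<pi> y / S)"
      by (simp only: sum_distrib_right)
    also have "\<dots> = abar * q y" by (simp only: abar2 q_def)
    finally show ?thesis .
  qed
  have qs: "(\<Sum>y\<in>Ob. q y) = 1" unfolding q_def S_def using Spos S_def
    by (simp add: sum_divide_distrib[symmetric])
  have qp: "\<forall>y\<in>Ob. q y > 0" unfolding q_def using pos ObX Spos by auto
  have KF: "\<forall>x\<in>Ob. \<forall>y\<in>Ob. K x y = (if x = y then 1 - abar else 0) + abar * q y"
  proof (intro ballI)
    fix x y assume xy: "x \<in> Ob" "y \<in> Ob"
    show "K x y = (if x = y then 1 - abar else 0) + abar * q y"
    proof (cases "x = y")
      case True
      have "(\<Sum>z\<in>Ob - {x}. kmult X (kmult X Gk P) Gk x z) = (\<Sum>z\<in>Ob - {x}. abar * q z)"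
        using M[OF xy(1)] by (intro sum.cong) auto
      also have "\<dots> = abar * (1 - q x)" using finOb xy qs by (simp add: sum_diff1 sum_distrib_left[symmetric])
      finally show ?thesis using True unfolding K_def restriction_chain_def Gk_def[symmetric]
        by (simp add: algebra_simps)
    next
      case False
      then show ?thesis unfolding K_def restriction_chain_def Gk_def[symmetric] using M[OF xy] by simp
    qed
  qed
  show ?thesis using eig_struct[OF finOb _ qs qp KF] x0Ob by blast
qed

end
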